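(* Let $f(z)=\sum_{n=0}^\infty a_nz^n$ be an analytic function in the open unit disk $\mathbb{D}=\{z\in\mathbb{C}:|z|<1\}$ such that $a_{0}\in (0,1)$ and $\operatorname{Re} f(z)<1$ in $\mathbb{D}$. Then $$\sum_{n=0}^\infty |a_n|r^n+\left(\frac{1}{1+a_0}+\frac{r}{1-r}\right)\sum_{n=1}^{\infty}|a_n|^2r^{2n} \le 1$$ holds for all $r\leq r_{*}$, where $r_{*}\approx 0.24683$ is the unique root of the equation $3r^3-5r^2-3r+1=0$ in the interval $(0,1)$. Moreover, for any $a_{0}\in (0,1)$ there exists a uniquely defined $r_0=r_0(a_0)\in \left(r_{*},\frac{1}{3}\right)$ such that $$\sum_{n=0}^\infty |a_n|r^n+\left(\frac{1}{1+a_0}+\frac{r}{1-r}\right)\sum_{n=1}^{\infty}|a_n|^2r^{2n} \le 1$$ for $r\in [0,r_0]$. The radius $r_0=r_0(a_0)$ can be calculated as the solution of the equation $$\Phi(\lambda,r)= 4r^3\lambda^2- (7r^3+3r^2-3r+1)\lambda +6r^3-2r^2-6r+2 = 0,$$ where $\lambda = 1 - a_0$. The result is sharp.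
   Context: $\mathbb{D}$ denotes the open unit disk $\{z\in\mathbb{C}:|z|<1\}$. *)

theory Defs
  imports "HOL-Analysis.Analysis"
begin

definition taylor_coeff :: "(complex \<Rightarrow> complex) \<Rightarrow> nat \<Rightarrow> complex" where
  "taylor_coeff f n = (deriv ^^ n) f 0 / of_nat (fact n)"

definition admissible :: "real \<Rightarrow> (complex \<Rightarrow> complex) \<Rightarrow> bool" where
  "admissible a0 f \<longleftrightarrow> f holomorphic_on ball 0 1 \<and> f 0 = complex_of_real a0 \<and>
     (\<forall>z\<in>ball 0 1. Re (f z) < 1)"

definition bohr_sum :: "(complex \<Rightarrow> complex) \<Rightarrow> real \<Rightarrow> real \<Rightarrow> real" where
  "bohr_sum f a0 r =
     (\<Sum>n. norm (taylor_coeff f n) * r ^ n) +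
     (1 / (1 + a0) + r / (1 - r)) * (\<Sum>n. (norm (taylor_coeff f (Suc n)))\<^sup>2 * r ^ (2 * Suc n))"

definition rstar_poly :: "real \<Rightarrow> real" where
  "rstar_poly r = 3 * r ^ 3 - 5 * r ^ 2 - 3 * r + 1"

definition rstar :: real where
  "rstar = (THE r. 0 < r \<and> r < 1 \<and> rstar_poly r = 0)"

definition Phi :: "real \<Rightarrow> real \<Rightarrow> real" where
  "Phi lam r = 4 * r ^ 3 * lam ^ 2 - (7 * r ^ 3 + 3 * r ^ 2 - 3 * r + 1) * lam
              + 6 * r ^ 3 - 2 * r ^ 2 - 6 * r + 2"

end

theory Submission
  imports Defs "HOL-Complex_Analysis.Complex_Analysis"
begin

lemma circ_eq: "circlepath 0 \<rho> t = complex_of_real \<rho> * cis (2*pi*t)"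
  by (simp add: circlepath cis_conv_exp mult_ac)

lemma circ_vd: "t \<in> {0..1} \<Longrightarrow> vector_derivative (circlepath 0 \<rho>) (at t within {0..1})
   = 2 * pi * \<i> * complex_of_real \<rho> * cis (2*pi*t)"
  by (simp add: vector_derivative_circlepath01 cis_conv_exp mult_ac)

lemma alg1:
  fixes X R C P :: complex
  assumes "R \<noteq> 0" "C \<noteq> 0"
  shows "X / (R*C)^Suc k * (P*R*C) = P / R^k * (X * inverse (C^k))"
proof -
  have "(R*C)^Suc k = (R*C) * (R^k * C^k)" by (simp add: power_mult_distrib)
  then show ?thesis using assms by (simp add: field_simps)
qed
lemma alg2:
  fixes X R C P :: complex
  shows "X * (R*C)^k * (P*R*C) = (P * R^Suc k) * (X * C^Suc k)"
  by (simp add: power_mult_distrib mult_ac)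

lemma circ_integral:
  assumes holo: "g holomorphic_on ball 0 1" and r: "0 < \<rho>" "\<rho> < 1"
  shows "((\<lambda>t. g (of_real \<rho> * cis (2*pi*t)) * cis (-(2*pi*t)) ^ k) has_integral
           ((deriv ^^ k) g 0 / fact k * of_real \<rho> ^ k)) {0..1}"
proof -
  have sub: "cball 0 \<rho> \<subseteq> ball (0::complex) 1" using r by auto
  have contf: "continuous_on (cball 0 \<rho>) g"
    using holomorphic_on_imp_continuous_on[OF holo] sub continuous_on_subset by blast
  have holf: "g holomorphic_on ball 0 \<rho>" by (rule holomorphic_on_subset[OF holo]) (use sub ball_subset_cball in blast)
  have "((\<lambda>u. g u / (u-0) ^ (Suc k)) has_contour_integral ((2 * pi * \<i>) / (fact k) * (deriv ^^ k) g 0))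
           (circlepath 0 \<rho>)"
    by (rule Cauchy_has_contour_integral_higher_derivative_circlepath[OF contf holf]) (use r in auto)
  then have H: "((\<lambda>t. g (circlepath 0 \<rho> t) / (circlepath 0 \<rho> t) ^ Suc k *
       vector_derivative (circlepath 0 \<rho>) (at t within {0..1})) has_integral
       ((2 * pi * \<i>) / (fact k) * (deriv ^^ k) g 0)) {0..1}"
    by (simp add: has_contour_integral_def)
  define c where "c = 2 * pi * \<i> / complex_of_real \<rho> ^ k"
  have c0: "c \<noteq> 0" using r by (simp add: c_def)
  have eq: "g (circlepath 0 \<rho> t) / (circlepath 0 \<rho> t) ^ Suc k *
       vector_derivative (circlepath 0 \<rho>) (at t within {0..1}) =
       c * (g (of_real \<rho> * cis (2*pi*t)) * cis (-(2*pi*t)) ^ k)" if "t \<in> {0..1}" for t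
  proof -
    have ci: "cis (-(2*pi*t)) ^ k = inverse (cis (2*pi*t) ^ k)"
      by (metis cis_inverse power_inverse)
    have "complex_of_real \<rho> \<noteq> 0" "cis (2*pi*t) \<noteq> 0" using r by auto
    then show ?thesis
      unfolding circ_eq circ_vd[OF that] ci c_def
      by (rule alg1)
  qed
  have "((\<lambda>t. c * (g (of_real \<rho> * cis (2*pi*t)) * cis (-(2*pi*t)) ^ k)) has_integral
       ((2 * pi * \<i>) / (fact k) * (deriv ^^ k) g 0)) {0..1}"
    by (rule has_integral_eq[OF eq H])
  then have "((\<lambda>t. g (of_real \<rho> * cis (2*pi*t)) * cis (-(2*pi*t)) ^ k) has_integral
       ((2 * pi * \<i>) / (fact k) * (deriv ^^ k) g 0) / c) {0..1}"
    using has_integral_mult_right_iff[OF c0] by blast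
  moreover have "((2 * pi * \<i>) / (fact k) * (deriv ^^ k) g 0) / c = (deriv ^^ k) g 0 / fact k * of_real \<rho> ^ k"
    using r by (simp add: c_def field_simps)
  ultimately show ?thesis by simp
qed

lemma circ_integral0:
  assumes holo: "g holomorphic_on ball 0 1" and r: "0 < \<rho>" "\<rho> < 1"
  shows "((\<lambda>t. g (of_real \<rho> * cis (2*pi*t)) * cis (2*pi*t) ^ Suc k) has_integral 0) {0..1}"
proof -
  have sub: "path_image (circlepath 0 \<rho>) \<subseteq> ball (0::complex) 1" using r
    by (auto simp: path_image_circlepath)
  have "((\<lambda>u. g u * u ^ k) has_contour_integral 0) (circlepath 0 \<rho>)"
    by (rule Cauchy_theorem_convex_simple[OF _ convex_ball _ sub]) (auto intro!: holomorphic_intros holo)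
  then have H: "((\<lambda>t. g (circlepath 0 \<rho> t) * (circlepath 0 \<rho> t) ^ k *
       vector_derivative (circlepath 0 \<rho>) (at t within {0..1})) has_integral 0) {0..1}"
    by (simp add: has_contour_integral_def)
  define c where "c = 2 * pi * \<i> * complex_of_real \<rho> ^ Suc k"
  have c0: "c \<noteq> 0" using r by (simp add: c_def)
  have eq: "g (circlepath 0 \<rho> t) * (circlepath 0 \<rho> t) ^ k *
       vector_derivative (circlepath 0 \<rho>) (at t within {0..1}) =
       c * (g (of_real \<rho> * cis (2*pi*t)) * cis (2*pi*t) ^ Suc k)" if "t \<in> {0..1}" for t
    unfolding circ_eq circ_vd[OF that] c_def
    by (rule alg2)
  have "((\<lambda>t. c * (g (of_real \<rho> * cis (2*pi*t)) * cis (2*pi*t) ^ Suc k)) has_integral 0) {0..1}"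
    by (rule has_integral_eq[OF eq H])
  then have "((\<lambda>t. g (of_real \<rho> * cis (2*pi*t)) * cis (2*pi*t) ^ Suc k) has_integral 0 / c) {0..1}"
    using has_integral_mult_right_iff[OF c0] by blast
  then show ?thesis by simp
qed

lemma carath_rho:
  assumes holo: "g holomorphic_on ball 0 1" and pos: "\<forall>z\<in>ball 0 1. Re (g z) > 0"
    and n: "n \<ge> 1" and r: "0 < \<rho>" "\<rho> < 1"
  shows "norm ((deriv ^^ n) g 0 / fact n) * \<rho> ^ n \<le> 2 * Re (g 0)"
proof -
  define h where "h t = g (of_real \<rho> * cis (2*pi*t))" for t
  obtain m where m: "n = Suc m" using n by (cases n) auto
  have I1: "((\<lambda>t. h t * cis (-(2*pi*t)) ^ n) has_integral
           ((deriv ^^ n) g 0 / fact n * of_real \<rho> ^ n)) {0..1}"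
    unfolding h_def by (rule circ_integral[OF holo r])
  have I0: "(h has_integral g 0) {0..1}"
    using circ_integral[OF holo r, of 0] unfolding h_def by simp
  have I2: "((\<lambda>t. h t * cis (2*pi*t) ^ n) has_integral 0) {0..1}"
    unfolding h_def m by (rule circ_integral0[OF holo r])
  have "((cnj \<circ> (\<lambda>t. h t * cis (2*pi*t) ^ n)) has_integral cnj 0) {0..1}"
    using I2 has_integral_cnj by blast
  then have I2': "((\<lambda>t. cnj (h t) * cis (-(2*pi*t)) ^ n) has_integral 0) {0..1}"
    by (simp add: o_def cis_cnj)
  have "((\<lambda>t. h t * cis (-(2*pi*t)) ^ n + cnj (h t) * cis (-(2*pi*t)) ^ n) has_integral
           ((deriv ^^ n) g 0 / fact n * of_real \<rho> ^ n + 0)) {0..1}"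
    by (rule has_integral_add[OF I1 I2'])
  then have I3: "((\<lambda>t. of_real (2 * Re (h t)) * cis (-(2*pi*t)) ^ n) has_integral
           ((deriv ^^ n) g 0 / fact n * of_real \<rho> ^ n)) {0..1}"
    by (simp add: distrib_right[symmetric] complex_add_cnj)
  have "((Re \<circ> h) has_integral Re (g 0)) {0..1}"
    using has_integral_linear[OF I0 bounded_linear_Re] by simp
  then have I4: "((\<lambda>t. 2 * Re (h t)) has_integral (2 * Re (g 0))) {0..1}"
    using has_integral_mult_right[of "Re \<circ> h" "Re (g 0)" "{0..1}" 2] by (simp add: o_def)
  have hpos: "Re (h t) > 0" for t
  proof -
    have "of_real \<rho> * cis (2*pi*t) \<in> ball 0 1" using r by (simp add: norm_mult)
    then show ?thesis using pos unfolding h_def by blast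
  qed
  have "norm (integral {0..1} (\<lambda>t. of_real (2 * Re (h t)) * cis (-(2*pi*t)) ^ n))
        \<le> integral {0..1} (\<lambda>t. 2 * Re (h t))"
  proof (rule integral_norm_bound_integral)
    show "(\<lambda>t. of_real (2 * Re (h t)) * cis (-(2*pi*t)) ^ n) integrable_on {0..1}"
      using I3 by blast
    show "(\<lambda>t. 2 * Re (h t)) integrable_on {0..1}" using I4 by blast
    fix t :: real
    show "norm (complex_of_real (2 * Re (h t)) * cis (- (2 * pi * t)) ^ n) \<le> 2 * Re (h t)"
      using hpos[of t] by (simp add: norm_mult norm_power)
  qed
  then have "norm ((deriv ^^ n) g 0 / fact n * of_real \<rho> ^ n) \<le> 2 * Re (g 0)"
    using integral_unique[OF I3] integral_unique[OF I4] by simp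
  moreover have "norm ((deriv ^^ n) g 0 / fact n * of_real \<rho> ^ n) = norm ((deriv ^^ n) g 0 / fact n) * \<rho> ^ n"
    by (metis norm_mult norm_power norm_of_real abs_of_pos r(1))
  ultimately show ?thesis by simp
qed

lemma carath:
  assumes holo: "g holomorphic_on ball 0 1" and pos: "\<forall>z\<in>ball 0 1. Re (g z) > 0"
    and n: "n \<ge> 1"
  shows "norm ((deriv ^^ n) g 0 / fact n) \<le> 2 * Re (g 0)"
proof -
  let ?a = "norm ((deriv ^^ n) g 0 / fact n)"
  have "((\<lambda>\<rho>. ?a * \<rho> ^ n) \<longlongrightarrow> ?a * 1 ^ n) (at_left (1::real))"
    by (intro tendsto_intros)
  moreover have "((\<lambda>\<rho>. 2 * Re (g 0)) \<longlongrightarrow> 2 * Re (g 0)) (at_left (1::real))"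
    by simp
  moreover have "eventually (\<lambda>\<rho>. ?a * \<rho> ^ n \<le> 2 * Re (g 0)) (at_left (1::real))"
    using eventually_at_left_real[of 0 "1::real"]
    by (rule eventually_mono) (use carath_rho[OF holo pos n] in auto)
  ultimately have "?a * 1 ^ n \<le> 2 * Re (g 0)"
    by (intro tendsto_le[of "at_left (1::real)"]) auto
  then show ?thesis by simp
qed


definition Fb :: "real \<Rightarrow> real \<Rightarrow> real" where
  "Fb a0 r = a0 + 2 * (1 - a0) * (r / (1 - r)) +
     (1 / (1 + a0) + r / (1 - r)) * (4 * (1 - a0)^2 * (r^2 / (1 - r^2)))"

lemma Fb_identity:
  assumes "0 < a0" "a0 < 1" "0 \<le> r" "r < 1"
  shows "1 - Fb a0 r = (1 - a0) * Phi (1 - a0) r / ((1 + a0) * (1 - r) * (1 - r^2))"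
proof -
  have "r^2 < 1" using assms by (simp add: abs_square_less_1)
  then have n: "1 - r \<noteq> 0" "1 - r^2 \<noteq> 0" "1 + a0 \<noteq> 0" using assms by auto
  define u where "u = r / (1 - r)"
  define v where "v = r^2 / (1 - r^2)"
  define w where "w = 1 / (1 + a0)"
  have hu: "u * (1 - r) = r" using n by (simp add: u_def)
  have hv: "v * (1 - r^2) = r^2" using n by (simp add: v_def)
  have hw: "w * (1 + a0) = 1" using n by (simp add: w_def)
  define D where "D = (1 + a0) * (1 - r) * (1 - r^2)"
  have e1: "u * D = (1 + a0) * (1 - r^2) * r"
  proof -
    have "u * D = (1 + a0) * (1 - r^2) * (u * (1 - r))" by (simp add: D_def mult_ac)
    then show ?thesis using hu by simp
  qed
  have e2: "w * v * D = (1 - r) * r^2"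
  proof -
    have "w * v * D = (1 - r) * ((w * (1 + a0)) * (v * (1 - r^2)))" by (simp add: D_def mult_ac)
    then show ?thesis using hw hv by simp
  qed
  have e3: "u * v * D = (1 + a0) * r * r^2"
  proof -
    have "u * v * D = (1 + a0) * ((u * (1 - r)) * (v * (1 - r^2)))" by (simp add: D_def mult_ac)
    then show ?thesis using hu hv by simp
  qed
  have "(1 - Fb a0 r) * D = (1 - a0) * D - 2 * (1 - a0) * (u * D)
        - 4 * (1 - a0)^2 * (w * v * D) - 4 * (1 - a0)^2 * (u * v * D)"
    unfolding Fb_def u_def[symmetric] v_def[symmetric] w_def[symmetric]
    by (simp add: algebra_simps)
  also have "\<dots> = (1 - a0) * (1 + a0) * (1 - r) * (1 - r^2) - 2 * (1 - a0) * ((1 + a0) * (1 - r^2) * r)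
        - 4 * (1 - a0)^2 * ((1 - r) * r^2) - 4 * (1 - a0)^2 * ((1 + a0) * r * r^2)"
    unfolding e1 e2 e3 by (simp add: D_def mult_ac)
  also have "\<dots> = (1 - a0) * Phi (1 - a0) r"
    unfolding Phi_def by (simp add: algebra_simps power2_eq_square power3_eq_cube)
  finally have "(1 - Fb a0 r) * ((1 + a0) * (1 - r) * (1 - r^2)) = (1 - a0) * Phi (1 - a0) r"
    unfolding D_def .
  moreover have "(1 + a0) * (1 - r) * (1 - r^2) \<noteq> 0" using n by simp
  ultimately show ?thesis by (simp add: eq_divide_eq)
qed

lemma frac_mono:
  fixes r s :: real assumes "0 \<le> r" "r < s" "s < 1"
  shows "r / (1 - r) < s / (1 - s)"
  using assms by (simp add: field_simps)

lemma frac2_mono: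
  fixes r s :: real assumes "0 \<le> r" "r < s" "s < 1"
  shows "r^2 / (1 - r^2) \<le> s^2 / (1 - s^2)"
proof -
  have "r^2 < s^2" using assms by (simp add: power_strict_mono)
  moreover have "s^2 < 1" using assms by (simp add: abs_square_less_1)
  moreover have "0 \<le> r^2" by simp
  ultimately have "r^2 / (1 - r^2) < s^2 / (1 - s^2)" by (intro frac_mono)
  then show ?thesis by simp
qed

lemma Fb_mono:
  assumes "0 < a0" "a0 < 1" "0 \<le> r" "r < s" "s < 1"
  shows "Fb a0 r < Fb a0 s"
proof -
  have 1: "r / (1 - r) < s / (1 - s)" using frac_mono assms by auto
  have 2: "r^2 / (1 - r^2) \<le> s^2 / (1 - s^2)" using frac2_mono assms by auto
  have p1: "0 \<le> r / (1 - r)" "0 \<le> r^2 / (1 - r^2)" using assms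
    by (auto intro!: divide_nonneg_nonneg simp: abs_square_le_1)
  have "(1 / (1 + a0) + r / (1 - r)) * (4 * (1 - a0)^2 * (r^2 / (1 - r^2)))
     \<le> (1 / (1 + a0) + s / (1 - s)) * (4 * (1 - a0)^2 * (s^2 / (1 - s^2)))"
  proof (rule mult_mono)
    show "4 * (1 - a0)^2 * (r^2 / (1 - r^2)) \<le> 4 * (1 - a0)^2 * (s^2 / (1 - s^2))"
      by (rule mult_left_mono[OF 2]) simp
    show "0 \<le> 4 * (1 - a0)^2 * (r^2 / (1 - r^2))" by (intro mult_nonneg_nonneg) (use p1 in auto)
  qed (use 1 p1 assms in auto)
  moreover have "2 * (1 - a0) * (r / (1 - r)) < 2 * (1 - a0) * (s / (1 - s))"
    by (rule mult_strict_left_mono[OF 1]) (use assms in simp)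
  ultimately show ?thesis unfolding Fb_def by linarith
qed

lemma p_decr:
  fixes x y :: real assumes "0 < x" "x < y" "y < 1"
  shows "rstar_poly y < rstar_poly x"
proof -
  have "rstar_poly x - rstar_poly y = (y - x) * (5 * (x + y) + 3 - 3 * (x^2 + x*y + y^2))"
    unfolding rstar_poly_def by (simp add: algebra_simps power2_eq_square power3_eq_cube)
  moreover have "x^2 < x" "y^2 < y" "x * y < y" using assms
    by (auto simp: power2_eq_square intro: mult_strict_left_mono[of _ 1, simplified] mult_strict_right_mono[of _ 1, simplified])
  then have "5 * (x + y) + 3 - 3 * (x^2 + x*y + y^2) > 0" using assms by (smt (verit))
  then have "(y - x) * (5 * (x + y) + 3 - 3 * (x^2 + x*y + y^2)) > 0" using assms by simp
  ultimately show ?thesis by linarith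
qed

lemma rstar_ex1: "\<exists>!r. 0 < r \<and> r < 1 \<and> rstar_poly r = 0"
proof -
  have c: "continuous_on {0..1} rstar_poly" unfolding rstar_poly_def by (intro continuous_intros)
  obtain x where x: "0 \<le> x" "x \<le> 1" "rstar_poly x = 0"
    using IVT2'[of rstar_poly 1 0 0, OF _ _ _ c] by (auto simp: rstar_poly_def)
  have "x \<noteq> 0" "x \<noteq> 1" using x by (auto simp: rstar_poly_def)
  then have ex: "0 < x \<and> x < 1 \<and> rstar_poly x = 0" using x by auto
  show ?thesis
  proof (rule ex1I[of _ x])
    show "0 < x \<and> x < 1 \<and> rstar_poly x = 0" by (rule ex)
    fix y assume y: "0 < y \<and> y < 1 \<and> rstar_poly y = 0"
    show "y = x"
    proof (rule ccontr)
      assume "y \<noteq> x"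
      then have "y < x \<or> x < y" by auto
      then show False using p_decr[of y x] p_decr[of x y] ex y by auto
    qed
  qed
qed

lemma rstar_props: "0 < rstar" "rstar < 1/3" "rstar_poly rstar = 0"
proof -
  have h: "0 < rstar \<and> rstar < 1 \<and> rstar_poly rstar = 0"
    unfolding rstar_def using theI'[OF rstar_ex1] .
  then show "0 < rstar" "rstar_poly rstar = 0" by auto
  show "rstar < 1/3"
  proof (rule ccontr)
    assume "\<not> rstar < 1/3"
    then have "rstar = 1/3 \<or> 1/3 < rstar" by auto
    moreover have "rstar_poly (1/3) = -4/9" by (simp add: rstar_poly_def power2_eq_square power3_eq_cube)
    ultimately show False
    proof (elim disjE)
      assume a: "rstar = 1/3" "rstar_poly (1/3) = -4/9"
      have "rstar_poly rstar = -4/9" using a by metis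
      then show False using h by simp
    next
      assume a: "1/3 < rstar" "rstar_poly (1/3) = -4/9"
      have "rstar_poly rstar < rstar_poly (1/3)" using p_decr[of "1/3" rstar] a h by simp
      then show False using a h by simp
    qed
  qed
qed

lemma Phi_at1: "Phi lam r = rstar_poly r + (lam - 1) * (4 * r^3 * (lam + 1) - (7 * r ^ 3 + 3 * r ^ 2 - 3 * r + 1))"
  unfolding Phi_def rstar_poly_def by (simp add: algebra_simps power2_eq_square)

lemma Phi_rstar_pos:
  assumes "0 < lam" "lam < 1" shows "Phi lam rstar > 0"
proof -
  let ?r = rstar
  have r: "0 < ?r" "?r < 1/3" using rstar_props by auto
  have "4 * ?r^3 * (lam + 1) < 8 * ?r^3" using assms r by simp
  moreover have "(7 * ?r ^ 3 + 3 * ?r ^ 2 - 3 * ?r + 1) - 8 * ?r^3 = (1 - ?r)^3"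
    by (simp add: algebra_simps power2_eq_square power3_eq_cube)
  moreover have "(1 - ?r)^3 > 0" using r by simp
  ultimately have "4 * ?r^3 * (lam + 1) - (7 * ?r ^ 3 + 3 * ?r ^ 2 - 3 * ?r + 1) < 0" by linarith
  moreover have "lam - 1 < 0" using assms by simp
  ultimately have "(lam - 1) * (4 * ?r^3 * (lam + 1) - (7 * ?r ^ 3 + 3 * ?r ^ 2 - 3 * ?r + 1)) > 0"
    by (simp add: mult_neg_neg)
  then show ?thesis using Phi_at1[of lam ?r] rstar_props(3) by simp
qed

lemma Phi_third_neg:
  assumes "0 < lam" "lam < 1" shows "Phi lam (1/3) < 0"
proof -
  have "Phi lam (1/3) = 4 * lam * (lam - 4) / 27"
    unfolding Phi_def by (simp add: algebra_simps power2_eq_square power3_eq_cube)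
  moreover have "lam * (lam - 4) < 0" using assms by (simp add: mult_pos_neg)
  ultimately show ?thesis by simp
qed


lemma geo1:
  fixes r :: real assumes "0 \<le> r" "r < 1"
  shows "(\<lambda>n. r ^ Suc n) sums (r / (1 - r))"
proof -
  have "(\<lambda>n. r ^ n) sums (1 / (1 - r))" using geometric_sums[of r] assms by simp
  then have "(\<lambda>n. r * r ^ n) sums (r * (1 / (1 - r)))" by (rule sums_mult)
  then show ?thesis by simp
qed

lemma geo2:
  fixes r :: real assumes "0 \<le> r" "r < 1"
  shows "(\<lambda>n. r ^ (2 * Suc n)) sums (r^2 / (1 - r^2))"
proof -
  have "r^2 < 1" using assms by (simp add: abs_square_less_1)
  then have "(\<lambda>n. (r^2) ^ Suc n) sums (r^2 / (1 - r^2))" by (intro geo1) auto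
  then show ?thesis by (simp only: power_mult)
qed

lemma coeff0: "admissible a0 f \<Longrightarrow> taylor_coeff f 0 = of_real a0"
  by (simp add: taylor_coeff_def admissible_def)

lemma coeff_bound:
  assumes adm: "admissible a0 f" and n: "n \<ge> 1"
  shows "norm (taylor_coeff f n) \<le> 2 * (1 - a0)"
proof -
  have holo: "f holomorphic_on ball 0 1" and f0: "f 0 = of_real a0"
    and re: "\<forall>z\<in>ball 0 1. Re (f z) < 1" using adm by (auto simp: admissible_def)
  define g where "g = (\<lambda>w. 1 - f w)"
  have hg: "g holomorphic_on ball 0 1" unfolding g_def by (intro holomorphic_intros holo)
  have pg: "\<forall>z\<in>ball 0 1. Re (g z) > 0" using re by (auto simp: g_def)
  have "(deriv ^^ n) g 0 = (deriv ^^ n) (\<lambda>w. 1) 0 - (deriv ^^ n) f 0"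
    unfolding g_def by (rule higher_deriv_diff) (auto intro: holo)
  then have "(deriv ^^ n) g 0 = - (deriv ^^ n) f 0" using n by simp
  then have "norm (taylor_coeff f n) = norm ((deriv ^^ n) g 0 / fact n)"
    by (simp add: taylor_coeff_def norm_divide)
  also have "\<dots> \<le> 2 * Re (g 0)" by (rule carath[OF hg pg n])
  also have "Re (g 0) = 1 - a0" by (simp add: g_def f0)
  finally show ?thesis .
qed

lemma bohr_le:
  assumes a: "0 < a0" "a0 < 1" and adm: "admissible a0 f" and r: "0 \<le> r" "r < 1"
  shows "bohr_sum f a0 r \<le> Fb a0 r"
proof -
  define A where "A n = norm (taylor_coeff f n) * r ^ n" for n
  define B where "B n = (norm (taylor_coeff f (Suc n)))\<^sup>2 * r ^ (2 * Suc n)" for n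
  have A1: "A (Suc n) \<le> 2 * (1 - a0) * r ^ Suc n" for n
    unfolding A_def by (rule mult_right_mono[OF coeff_bound[OF adm]]) (use r in auto)
  have B1: "B n \<le> 4 * (1 - a0)^2 * r ^ (2 * Suc n)" for n
  proof -
    have "(norm (taylor_coeff f (Suc n)))\<^sup>2 \<le> (2 * (1 - a0))^2"
      by (rule power_mono[OF coeff_bound[OF adm]]) auto
    also have "(2 * (1 - a0))^2 = 4 * (1 - a0)^2" by (simp add: power2_eq_square algebra_simps)
    finally have "(norm (taylor_coeff f (Suc n)))\<^sup>2 \<le> 4 * (1 - a0)^2" .
    then show ?thesis unfolding B_def
      by (intro mult_right_mono) (use r in auto)
  qed
  have sA: "(\<lambda>n. 2 * (1 - a0) * r ^ Suc n) sums (2 * (1 - a0) * (r / (1 - r)))"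
    by (rule sums_mult[OF geo1[OF r]])
  have sB: "(\<lambda>n. 4 * (1 - a0)^2 * r ^ (2 * Suc n)) sums (4 * (1 - a0)^2 * (r^2 / (1 - r^2)))"
    by (rule sums_mult[OF geo2[OF r]])
  have A0: "0 \<le> A n" for n unfolding A_def using r by simp
  have B0: "0 \<le> B n" for n unfolding B_def using r by simp
  have sumA1: "summable (\<lambda>n. A (Suc n))"
  proof (rule summable_comparison_test'[OF sums_summable[OF sA], of 0])
    fix n :: nat show "norm (A (Suc n)) \<le> 2 * (1 - a0) * r ^ Suc n" using A1[of n] A0[of "Suc n"] by simp
  qed
  then have sumA: "summable A" by (simp add: summable_Suc_iff)
  have sumB: "summable B"
  proof (rule summable_comparison_test'[OF sums_summable[OF sB], of 0])
    fix n :: nat show "norm (B n) \<le> 4 * (1 - a0)^2 * r ^ (2 * Suc n)" using B1[of n] B0[of n] by simp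
  qed
  have "suminf A = A 0 + (\<Sum>n. A (Suc n))" using suminf_split_head[OF sumA] by simp
  also have "A 0 = a0" using coeff0[OF adm] a by (simp add: A_def)
  also have "(\<Sum>n. A (Suc n)) \<le> 2 * (1 - a0) * (r / (1 - r))"
    using suminf_le[OF A1 sumA1 sums_summable[OF sA]] sums_unique[OF sA] by simp
  finally have hA: "suminf A \<le> a0 + 2 * (1 - a0) * (r / (1 - r))" by simp
  have hB: "suminf B \<le> 4 * (1 - a0)^2 * (r^2 / (1 - r^2))"
    using suminf_le[OF B1 sumB sums_summable[OF sB]] sums_unique[OF sB] by simp
  have c0: "0 \<le> 1 / (1 + a0) + r / (1 - r)" using a r by auto
  have "(1 / (1 + a0) + r / (1 - r)) * suminf B \<le> (1 / (1 + a0) + r / (1 - r)) * (4 * (1 - a0)^2 * (r^2 / (1 - r^2)))"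
    by (rule mult_left_mono[OF hB c0])
  then show ?thesis using hA unfolding bohr_sum_def Fb_def A_def[symmetric] B_def[symmetric]
    by linarith
qed


lemma alg3:
  fixes w c :: complex assumes "w \<noteq> 0"
  shows "(0 * w ^ Suc k - c * (of_nat (Suc k) * w ^ k * (-1))) / (w ^ Suc k * w ^ Suc k)
     = c * of_nat (Suc k) / w ^ Suc (Suc k)"
proof -
  have e: "w ^ Suc k * w ^ Suc k = w ^ k * w ^ Suc (Suc k)"
    by (simp add: power_add[symmetric])
  have "w ^ k \<noteq> 0" using assms by simp
  then show ?thesis unfolding e by simp
qed

lemma inv_deriv:
  fixes c :: complex and k :: nat assumes "z \<noteq> 1"
  shows "((\<lambda>w. c / (1 - w) ^ Suc k) has_field_derivative (c * of_nat (Suc k) / (1 - z) ^ Suc (Suc k))) (at z)"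
proof -
  have nz: "1 - z \<noteq> 0" using assms by simp
  have d0: "((\<lambda>w. 1 - w) has_field_derivative (0 - 1)) (at z)"
    by (intro DERIV_diff DERIV_const DERIV_ident)
  have d1': "((\<lambda>w. (1 - w) ^ Suc k) has_field_derivative (1 + of_nat k) * ((0 - 1) * (1 - z) ^ k)) (at z)"
    by (rule DERIV_power_Suc[OF d0])
  have "(1 + of_nat k) * ((0 - 1) * (1 - z) ^ k) = of_nat (Suc k) * (1 - z) ^ k * (-1::complex)"
    by (simp add: algebra_simps)
  with d1' have d1: "((\<lambda>w. (1 - w) ^ Suc k) has_field_derivative (of_nat (Suc k) * (1 - z) ^ k * (-1))) (at z)"
    by simp
  have "((\<lambda>w. c / (1 - w) ^ Suc k) has_field_derivative
     ((0 * (1 - z) ^ Suc k - c * (of_nat (Suc k) * (1 - z) ^ k * (-1))) / ((1 - z) ^ Suc k * (1 - z) ^ Suc k))) (at z)"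
    by (rule DERIV_divide[OF DERIV_const d1]) (use nz in simp)
  moreover have "(0 * (1 - z) ^ Suc k - c * (of_nat (Suc k) * (1 - z) ^ k * (-1))) / ((1 - z) ^ Suc k * (1 - z) ^ Suc k)
     = c * of_nat (Suc k) / (1 - z) ^ Suc (Suc k)"
    by (rule alg3[OF nz])
  ultimately show ?thesis by simp
qed

lemma higher_inv:
  fixes c :: complex
  shows "z \<in> ball 0 1 \<Longrightarrow> (deriv ^^ n) (\<lambda>w. c / (1 - w)) z = c * fact n / (1 - z) ^ Suc n"
proof (induction n arbitrary: z)
  case 0 then show ?case by simp
next
  case (Suc n z)
  have ev: "eventually (\<lambda>x. (deriv ^^ n) (\<lambda>w. c / (1 - w)) x = c * fact n / (1 - x) ^ Suc n) (nhds z)"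
    using eventually_nhds_in_open[OF open_ball Suc.prems] by (rule eventually_mono) (use Suc.IH in auto)
  have z1: "z \<noteq> 1" using Suc.prems by auto
  have "(deriv ^^ Suc n) (\<lambda>w. c / (1 - w)) z = deriv ((deriv ^^ n) (\<lambda>w. c / (1 - w))) z"
    by simp
  also have "\<dots> = deriv (\<lambda>x. (c * fact n) / (1 - x) ^ Suc n) z"
    by (rule deriv_cong_ev[OF ev refl])
  also have "\<dots> = c * fact n * of_nat (Suc n) / (1 - z) ^ Suc (Suc n)"
    by (rule DERIV_imp_deriv[OF inv_deriv[OF z1]])
  also have "\<dots> = c * fact (Suc n) / (1 - z) ^ Suc (Suc n)"
    by (simp add: algebra_simps)
  finally show ?case .
qed

definition fe :: "real \<Rightarrow> complex \<Rightarrow> complex" where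
  "fe a0 = (\<lambda>z. of_real (2 - a0) - of_real (2 * (1 - a0)) / (1 - z))"

lemma fe_holo: "fe a0 holomorphic_on ball 0 1"
  unfolding fe_def by (intro holomorphic_intros) auto

lemma fe_coeff:
  assumes "n \<ge> 1" shows "taylor_coeff (fe a0) n = - of_real (2 * (1 - a0))"
proof -
  have h2: "(\<lambda>w. of_real (2 * (1 - a0)) / (1 - w)) holomorphic_on ball 0 (1::real)"
    by (intro holomorphic_intros) auto
  have "(deriv ^^ n) (fe a0) 0 = (deriv ^^ n) (\<lambda>w. of_real (2 - a0)) 0 -
          (deriv ^^ n) (\<lambda>w. of_real (2 * (1 - a0)) / (1 - w)) 0"
    unfolding fe_def by (rule higher_deriv_diff[OF _ h2]) auto
  also have "\<dots> = - (of_real (2 * (1 - a0)) * fact n)"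
    using assms by (simp add: higher_inv)
  finally show ?thesis by (simp add: taylor_coeff_def)
qed

lemma fe_adm:
  assumes "0 < a0" "a0 < 1" shows "admissible a0 (fe a0)"
  unfolding admissible_def
proof (intro conjI ballI fe_holo)
  show "fe a0 0 = of_real a0" by (simp add: fe_def)
  fix z :: complex assume z: "z \<in> ball 0 1"
  define x where "x = Re z"
  define y where "y = Im z"
  have nz: "norm z < 1" using z by simp
  have "(norm z)^2 < 1^2" by (rule power_strict_mono[OF nz]) auto
  then have xy: "x^2 + y^2 < 1" by (simp add: x_def y_def cmod_power2)
  have x1: "x < 1"
  proof (rule ccontr)
    assume "\<not> x < 1" then have "1 \<le> x" by simp
    then have "1 \<le> x^2" by (simp add: one_le_power)
    moreover have "0 \<le> y^2" by simp
    ultimately show False using xy by linarith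
  qed
  define Q where "Q = (1 - x)^2 + y^2"
  have Qp: "Q > 0" unfolding Q_def using x1 by (intro add_pos_nonneg) auto
  have Qe: "Q = 1 - 2 * x + (x^2 + y^2)" unfolding Q_def by (simp add: power2_eq_square algebra_simps)
  have "Re (1 / (1 - z)) = (1 - x) / Q"
    by (simp add: Re_divide x_def y_def Q_def)
  moreover have "1/2 < (1 - x) / Q"
    using Qp Qe xy by (simp add: less_divide_eq)
  ultimately have re: "1/2 < Re (1 / (1 - z))" by simp
  define w where "w = 1 / (1 - z)"
  have "fe a0 z = of_real (2 - a0) - of_real (2 * (1 - a0)) * w" by (simp add: fe_def w_def)
  then have "Re (fe a0 z) = (2 - a0) - 2 * (1 - a0) * Re w" by simp
  then have "Re (fe a0 z) = (2 - a0) - 2 * (1 - a0) * Re (1 / (1 - z))" by (simp only: w_def)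
  moreover have "2 * (1 - a0) * (1/2) < 2 * (1 - a0) * Re (1 / (1 - z))"
    by (rule mult_strict_left_mono[OF re]) (use assms in simp)
  ultimately show "Re (fe a0 z) < 1" by simp
qed

lemma fe_bohr:
  assumes a: "0 < a0" "a0 < 1" and r: "0 \<le> r" "r < 1"
  shows "bohr_sum (fe a0) a0 r = Fb a0 r"
proof -
  have c1: "norm (taylor_coeff (fe a0) (Suc n)) = 2 * (1 - a0)" for n
  proof -
    have "taylor_coeff (fe a0) (Suc n) = - of_real (2 * (1 - a0))" by (rule fe_coeff) simp
    then show ?thesis using a by (simp only: norm_minus_cancel norm_of_real) simp
  qed
  have "(\<lambda>n. norm (taylor_coeff (fe a0) (Suc n)) * r ^ Suc n) sums (2 * (1 - a0) * (r / (1 - r)))"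
    unfolding c1 by (rule sums_mult[OF geo1[OF r]])
  from sums_Suc[OF this] have "(\<lambda>n. norm (taylor_coeff (fe a0) n) * r ^ n) sums
       (2 * (1 - a0) * (r / (1 - r)) + a0)"
    using coeff0[OF fe_adm[OF a]] a by simp
  then have sA: "(\<Sum>n. norm (taylor_coeff (fe a0) n) * r ^ n) = 2 * (1 - a0) * (r / (1 - r)) + a0"
    by (rule sums_unique[symmetric])
  have "(\<lambda>n. (norm (taylor_coeff (fe a0) (Suc n)))\<^sup>2 * r ^ (2 * Suc n)) sums
         (4 * (1 - a0)^2 * (r^2 / (1 - r^2)))"
  proof -
    have "(\<lambda>n. (norm (taylor_coeff (fe a0) (Suc n)))\<^sup>2 * r ^ (2 * Suc n)) = (\<lambda>n. 4 * (1 - a0)^2 * r ^ (2 * Suc n))"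
      by (rule ext) (simp only: c1 power_mult_distrib, simp)
    then show ?thesis using sums_mult[OF geo2[OF r], of "4 * (1 - a0)^2"] by simp
  qed
  then have sB: "(\<Sum>n. (norm (taylor_coeff (fe a0) (Suc n)))\<^sup>2 * r ^ (2 * Suc n)) = 4 * (1 - a0)^2 * (r^2 / (1 - r^2))"
    by (rule sums_unique[symmetric])
  show ?thesis unfolding bohr_sum_def sA sB Fb_def by simp
qed


lemma Fb_one_iff:
  assumes a: "0 < a0" "a0 < 1" and r: "0 \<le> r" "r < 1"
  shows "Fb a0 r = 1 \<longleftrightarrow> Phi (1 - a0) r = 0"
proof -
  have "r^2 < 1" using r by (simp add: abs_square_less_1)
  then have D: "(1 + a0) * (1 - r) * (1 - r^2) \<noteq> 0" using a r by auto
  have "1 - Fb a0 r = (1 - a0) * Phi (1 - a0) r / ((1 + a0) * (1 - r) * (1 - r^2))"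
    by (rule Fb_identity[OF a r])
  then show ?thesis using D a by auto
qed

lemma main_a0:
  assumes a: "0 < a0" "a0 < 1"
  shows "(\<exists>!r0. rstar < r0 \<and> r0 < 1/3 \<and> Phi (1 - a0) r0 = 0)
        \<and> (\<forall>r0. rstar < r0 \<and> r0 < 1/3 \<and> Phi (1 - a0) r0 = 0 \<longrightarrow>
              (\<forall>f r. admissible a0 f \<and> 0 \<le> r \<and> r \<le> r0 \<longrightarrow> bohr_sum f a0 r \<le> 1)
            \<and> (\<forall>r. r0 < r \<and> r < 1 \<longrightarrow> (\<exists>f. admissible a0 f \<and> bohr_sum f a0 r > 1)))"
proof -
  have l: "0 < 1 - a0" "1 - a0 < 1" using a by auto
  have rs: "0 < rstar" "rstar < 1/3" using rstar_props by auto
  have p1: "Phi (1 - a0) rstar > 0" by (rule Phi_rstar_pos[OF l])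
  have p2: "Phi (1 - a0) (1/3) < 0" by (rule Phi_third_neg[OF l])
  have c: "continuous_on {rstar..1/3} (Phi (1 - a0))" unfolding Phi_def by (intro continuous_intros)
  obtain x where x: "rstar \<le> x" "x \<le> 1/3" "Phi (1 - a0) x = 0"
    using IVT2'[of "Phi (1 - a0)" "1/3" 0 rstar, OF _ _ _ c] p1 p2 rs by auto
  have x2: "rstar < x" "x < 1/3" using x p1 p2
    by (metis less_irrefl order_le_less)+
  have one: "Fb a0 r0 = 1" if "rstar < r0" "r0 < 1/3" "Phi (1 - a0) r0 = 0" for r0
    using Fb_one_iff[OF a, of r0] that rs by auto
  have ex1: "\<exists>!r0. rstar < r0 \<and> r0 < 1/3 \<and> Phi (1 - a0) r0 = 0"
  proof (rule ex1I[of _ x])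
    show "rstar < x \<and> x < 1/3 \<and> Phi (1 - a0) x = 0" using x x2 by auto
    fix y assume y: "rstar < y \<and> y < 1/3 \<and> Phi (1 - a0) y = 0"
    have fy: "Fb a0 y = 1" using one y by auto
    have fx: "Fb a0 x = 1" using one x x2 by auto
    show "y = x"
    proof (rule ccontr)
      assume "y \<noteq> x"
      then have "y < x \<or> x < y" by auto
      then show False
        using Fb_mono[OF a, of y x] Fb_mono[OF a, of x y] fx fy y x2 rs by auto
    qed
  qed
  show ?thesis
  proof (rule conjI[OF ex1], rule allI, rule impI, rule conjI)
    fix r0 assume r0: "rstar < r0 \<and> r0 < 1/3 \<and> Phi (1 - a0) r0 = 0"
    have f1: "Fb a0 r0 = 1" using one r0 by auto
    show "\<forall>f r. admissible a0 f \<and> 0 \<le> r \<and> r \<le> r0 \<longrightarrow> bohr_sum f a0 r \<le> 1"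
    proof (intro allI impI)
      fix f r assume h: "admissible a0 f \<and> 0 \<le> r \<and> r \<le> r0"
      have "bohr_sum f a0 r \<le> Fb a0 r" using bohr_le[OF a] h r0 by auto
      also have "Fb a0 r \<le> Fb a0 r0"
        using Fb_mono[OF a, of r r0] h r0 by (cases "r = r0") auto
      finally show "bohr_sum f a0 r \<le> 1" using f1 by simp
    qed
    show "\<forall>r. r0 < r \<and> r < 1 \<longrightarrow> (\<exists>f. admissible a0 f \<and> bohr_sum f a0 r > 1)"
    proof (intro allI impI)
      fix r assume h: "r0 < r \<and> r < 1"
      have "bohr_sum (fe a0) a0 r = Fb a0 r" using fe_bohr[OF a] h r0 rs by auto
      moreover have "Fb a0 r0 < Fb a0 r" using Fb_mono[OF a, of r0 r] h r0 rs by auto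
      ultimately show "\<exists>f. admissible a0 f \<and> bohr_sum f a0 r > 1"
        using fe_adm[OF a] f1 by auto
    qed
  qed
qed

theorem theorem1:
  shows "(\<exists>!r. 0 < r \<and> r < 1 \<and> rstar_poly r = 0)
    \<and> (\<forall>a0 f r. 0 < a0 \<and> a0 < 1 \<and> admissible a0 f \<and> 0 \<le> r \<and> r \<le> rstar
          \<longrightarrow> bohr_sum f a0 r \<le> 1)
    \<and> (\<forall>a0. 0 < a0 \<and> a0 < 1 \<longrightarrow>
          (\<exists>!r0. rstar < r0 \<and> r0 < 1/3 \<and> Phi (1 - a0) r0 = 0)
        \<and> (\<forall>r0. rstar < r0 \<and> r0 < 1/3 \<and> Phi (1 - a0) r0 = 0 \<longrightarrow>
              (\<forall>f r. admissible a0 f \<and> 0 \<le> r \<and> r \<le> r0 \<longrightarrow> bohr_sum f a0 r \<le> 1)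
            \<and> (\<forall>r. r0 < r \<and> r < 1 \<longrightarrow> (\<exists>f. admissible a0 f \<and> bohr_sum f a0 r > 1))))"
proof -
  have A: "\<exists>!r. 0 < r \<and> r < 1 \<and> rstar_poly r = 0" by (rule rstar_ex1)
  have B: "\<forall>a0 f r. 0 < a0 \<and> a0 < 1 \<and> admissible a0 f \<and> 0 \<le> r \<and> r \<le> rstar
          \<longrightarrow> bohr_sum f a0 r \<le> 1"
  proof (intro allI impI)
    fix a0 f r assume h: "0 < a0 \<and> a0 < 1 \<and> admissible a0 f \<and> 0 \<le> r \<and> r \<le> rstar"
    then have a: "0 < a0" "a0 < 1" by auto
    obtain r0 where r0: "rstar < r0 \<and> r0 < 1/3 \<and> Phi (1 - a0) r0 = 0"
      using main_a0[OF a] by blast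
    have "\<forall>f r. admissible a0 f \<and> 0 \<le> r \<and> r \<le> r0 \<longrightarrow> bohr_sum f a0 r \<le> 1"
      using main_a0[OF a] r0 by blast
    then show "bohr_sum f a0 r \<le> 1" using h r0 by auto
  qed
  have C: "\<forall>a0. 0 < a0 \<and> a0 < 1 \<longrightarrow>
          (\<exists>!r0. rstar < r0 \<and> r0 < 1/3 \<and> Phi (1 - a0) r0 = 0)
        \<and> (\<forall>r0. rstar < r0 \<and> r0 < 1/3 \<and> Phi (1 - a0) r0 = 0 \<longrightarrow>
              (\<forall>f r. admissible a0 f \<and> 0 \<le> r \<and> r \<le> r0 \<longrightarrow> bohr_sum f a0 r \<le> 1)
            \<and> (\<forall>r. r0 < r \<and> r < 1 \<longrightarrow> (\<exists>f. admissible a0 f \<and> bohr_sum f a0 r > 1)))"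
  proof (intro allI impI)
    fix a0 :: real assume "0 < a0 \<and> a0 < 1"
    then have "0 < a0" "a0 < 1" by auto
    then show "(\<exists>!r0. rstar < r0 \<and> r0 < 1/3 \<and> Phi (1 - a0) r0 = 0)
        \<and> (\<forall>r0. rstar < r0 \<and> r0 < 1/3 \<and> Phi (1 - a0) r0 = 0 \<longrightarrow>
              (\<forall>f r. admissible a0 f \<and> 0 \<le> r \<and> r \<le> r0 \<longrightarrow> bohr_sum f a0 r \<le> 1)
            \<and> (\<forall>r. r0 < r \<and> r < 1 \<longrightarrow> (\<exists>f. admissible a0 f \<and> bohr_sum f a0 r > 1)))"
      by (rule main_a0)
  qed
  show ?thesis by (rule conjI[OF A conjI[OF B C]])
qed

end
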